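(* For $i\in\{0,1\}$ and $m\ge0$, $$\Psi^{-1}\big(P_{\Lambda_0}^{\Lambda_i}(w_m)\big)=\{(\mu_1,\dots,\mu_l)\in\mathcal{Y}(0):\ \text{the parts }\mu_k\text{ are distinct and all odd (if }i=0\text{) resp. all even (if }i=1\text{)},\ \mu_1\le m\},$$ where $P_{\Lambda_0}^{\Lambda_i}(w_m)$ is the set of $\Lambda_i$-dominant LS paths of shape $\Lambda_0$ whose initial direction is $\le w_m$ in Bruhat order.
   Context: Notation as follows. $\widehat{\mathfrak{sl}_2}$: affine Kac–Moody algebra, simple roots $\alpha_0,\alpha_1$, fundamental weights $\Lambda_0,\Lambda_1$, Weyl group $W=\langle s_0,s_1\rangle$; $s_j:=s_{j\bmod 2}$ and $w_k:=s_{k-1}\cdots s_1s_0$ ($w_0=1$); these are the minimal coset representatives of $W/W_{\Lambda_0}$ and $w_m>w_n$ in Bruhat order iff $m>n$. An LS path of shape $\Lambda_0$ is written $\pi=(\sigma_1>\dots>\sigma_r;\,0=a_0<a_1<\dots<a_r=1)$; $\sigma_1$ is its initial direction; its turning points are $\sum_{k\le j}(a_k-a_{k-1})\sigma_k\Lambda_0$ for $0\le j\le r$; $\pi$ is $\lambda$-dominant if $\lambda+\gamma$ is dominant for every turning point $\gamma$. $\mathcal{Y}(0)$ is the set of partitions with distinct nonzero parts (regular charged partitions of charge $0$). For $b=(\mu_1>\dots>\mu_l>0)$ put $m=\mu_1$, $n=l$, $\tilde b=(\mu_1-n,\mu_2-(n-1),\dots,\mu_l-1)$, and let the conjugate of $\tilde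 b$ be $(i_{n+1}\ge\dots\ge i_m)$. Then $\Psi(b)=(w_m>w_{m-1}>\dots>w_n;\ 0<\tfrac{i_m}{m}<\dots<\tfrac{i_{n+1}}{n+1}<1)$, and $\Psi(\emptyset)=(1;0<1)$. *)

theory Defs
  imports Complex_Main "HOL-Library.Product_Plus"
begin

text \<open>Concrete model of the real weight space of affine sl_2: a weight is written in
 the basis Lambda_0, Lambda_1, delta, i.e. as a triple (c0, c1, d) meaning
 c0 Lambda_0 + c1 Lambda_1 + d delta (rational coefficients suffice for LS paths).\<close>

type_synonym wt = "rat \<times> rat \<times> rat"

definition smultw :: "rat \<Rightarrow> wt \<Rightarrow> wt" where
  "smultw c w = (case w of (a, b, d) \<Rightarrow> (c * a, c * b, c * d))"

definition Lam :: "nat \<Rightarrow> wt" where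
  "Lam i = (if i mod 2 = 0 then (1, 0, 0) else (0, 1, 0))"

text \<open>Simple roots: alpha_0 = 2 Lambda_0 - 2 Lambda_1 + delta, alpha_1 = 2 Lambda_1 - 2 Lambda_0;
 indices taken mod 2 (s_j := s_{j mod 2}).\<close>
definition sroot :: "nat \<Rightarrow> wt" where
  "sroot j = (if j mod 2 = 0 then (2, -2, 1) else (-2, 2, 0))"

definition copair :: "nat \<Rightarrow> wt \<Rightarrow> rat" where
  "copair j w = (case w of (a, b, d) \<Rightarrow> if j mod 2 = 0 then a else b)"

definition sref :: "nat \<Rightarrow> wt \<Rightarrow> wt" where
  "sref j w = w - smultw (copair j w) (sroot j)"

fun wact :: "nat \<Rightarrow> wt \<Rightarrow> wt" where
  "wact 0 w = w"
| "wact (Suc k) w = sref k (wact k w)"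

definition dominant :: "wt \<Rightarrow> bool" where
  "dominant w \<longleftrightarrow> copair 0 w \<ge> 0 \<and> copair 1 w \<ge> 0"

text \<open>An LS path of shape Lambda_0 (sigma_1 > ... > sigma_r; 0 < a_1 < ... < a_r = 1) is
 represented as a pair (ks, as) with sigma_j = w_(ks!(j-1)) (the minimal coset
 representatives of W/W_Lambda0, Bruhat order = order of indices) and a_j = as!(j-1).\<close>
type_synonym lspath = "nat list \<times> rat list"

text \<open>Since W/W_Lambda0 is the chain
 w_0 < w_1 < ..., with covers w_(k+1) = s_k w_k, an a-chain for (w_p, w_q), p > q,
 exists iff a * <w_k Lambda_0, alpha_k^vee> is an integer for all q <= k < p.\<close>
definition a_chain :: "rat \<Rightarrow> nat \<Rightarrow> nat \<Rightarrow> bool" where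
  "a_chain a p q \<longleftrightarrow> q < p \<and> (\<forall>k. q \<le> k \<and> k < p \<longrightarrow> a * copair k (wact k (Lam 0)) \<in> \<int>)"

definition is_LS :: "lspath \<Rightarrow> bool" where
  "is_LS \<pi> \<longleftrightarrow> (case \<pi> of (ks, as) \<Rightarrow>
      ks \<noteq> [] \<and> length as = length ks \<and> sorted_wrt (>) ks \<and>
      sorted_wrt (<) (0 # as) \<and> last as = 1 \<and>
      (\<forall>j. 0 < j \<and> j < length ks \<longrightarrow> a_chain (as ! (j - 1)) (ks ! (j - 1)) (ks ! j)))"

definition turning :: "lspath \<Rightarrow> nat \<Rightarrow> wt" where
  "turning \<pi> j = (\<Sum>t<j. smultw (snd \<pi> ! t - (if t = 0 then 0 else snd \<pi> ! (t - 1)))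
                                (wact (fst \<pi> ! t) (Lam 0)))"

definition lam_dominant :: "wt \<Rightarrow> lspath \<Rightarrow> bool" where
  "lam_dominant lam \<pi> \<longleftrightarrow> (\<forall>j \<le> length (fst \<pi>). dominant (lam + turning \<pi> j))"

definition Pdom :: "nat \<Rightarrow> nat \<Rightarrow> lspath set" where
  "Pdom i m = {\<pi>. is_LS \<pi> \<and> lam_dominant (Lam i) \<pi> \<and> hd (fst \<pi>) \<le> m}"

definition Y0 :: "nat list set" where
  "Y0 = {b. sorted_wrt (>) b \<and> (\<forall>x \<in> set b. 0 < x)}"

text \<open>The map Psi. For b = (mu_1 > ... > mu_n), m = mu_1 (0 if b empty),
 tilde b_k = mu_k - (n - k + 1), and i_(n+j) = #{k. tilde b_k >= j} (conjugate).\<close>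
definition Psi :: "nat list \<Rightarrow> lspath" where
  "Psi b = (let m = (if b = [] then 0 else hd b); n = length b;
               ic = (\<lambda>j. card {k. k < n \<and> b ! k - (n - k) \<ge> j})
            in (rev [n..<Suc m],
                map (\<lambda>t. of_nat (ic (t - n)) / of_nat t) (rev [Suc n..<Suc m]) @ [1]))"

end

theory Submission
  imports Defs
begin

lemma copair_eq: "copair k w = (if even k then fst w else fst (snd w))"
  by (cases w) (simp add: copair_def even_iff_mod_2_eq_zero)

lemma wact_L0:
  "fst (wact k (Lam 0)) = (if even k then of_nat k + 1 else - of_nat k) \<and>
   fst (snd (wact k (Lam 0))) = (if even k then - of_nat k else of_nat k + 1)"
proof (induction k)
  case 0
  then show ?case by (simp add: Lam_def)
next
  case (Suc k)
  obtain x y z where w: "wact k (Lam 0) = (x, y, z)" by (cases "wact k (Lam 0)") auto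
  have sr: "sroot k = (if even k then (2,-2,1) else (-2,2,0))" by (simp add: sroot_def even_iff_mod_2_eq_zero)
  show ?case using Suc w
    by (simp add: sref_def smultw_def copair_eq sr)
qed

lemma copair_wact: "copair k (wact k (Lam 0)) = of_nat k + 1"
  using wact_L0[of k] by (simp add: copair_eq)

lemma fst_smultw: "fst (smultw c w) = c * fst w" and snd_smultw: "fst (snd (smultw c w)) = c * fst (snd w)"
  by (cases w, simp add: smultw_def)+

lemma down_closed_eq:
  fixes S :: "nat set"
  assumes "finite S" "\<forall>k\<in>S. \<forall>j\<le>k. j \<in> S"
  shows "S = {..<card S}"
proof (cases "S = {}")
  case True then show ?thesis by simp
next
  case False
  have e: "S = {..Max S}"
  proof
    show "S \<subseteq> {..Max S}" using assms(1) by (auto intro: Max_ge)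
    show "{..Max S} \<subseteq> S" using assms(2) Max_in[OF assms(1) False] by auto
  qed
  then have "card S = Suc (Max S)" by (metis card_atMost)
  then show ?thesis using e by (metis lessThan_Suc_atMost)
qed

definition cc :: "nat list \<Rightarrow> nat \<Rightarrow> nat" where
  "cc b t = card {k. k < length b \<and> t \<le> b!k + k}"
definition aa :: "nat list \<Rightarrow> nat \<Rightarrow> rat" where
  "aa b t = of_nat (cc b t) / of_nat t"
definition GG :: "nat list \<Rightarrow> nat \<Rightarrow> int" where
  "GG b t = (\<Sum>k<cc b t. (-1::int)^(b!k+k))"

context
  fixes b :: "nat list"
  assumes sd: "sorted_wrt (>) b" and pos: "\<forall>x\<in>set b. 0 < x"
begin

lemma gap: "k \<le> j \<Longrightarrow> j < length b \<Longrightarrow> b!j + (j - k) \<le> b!k"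
proof (induction j)
  case 0 then show ?case by simp
next
  case (Suc j)
  show ?case
  proof (cases "k = Suc j")
    case True then show ?thesis by simp
  next
    case False
    then have kj: "k \<le> j" using Suc.prems by simp
    have "b!(Suc j) < b!j" using sorted_wrt_nth_less[OF sd, of j "Suc j"] Suc.prems by simp
    moreover have "b!j + (j-k) \<le> b!k" using Suc.IH kj Suc.prems by simp
    ultimately show ?thesis using kj by (simp add: Suc_diff_le)
  qed
qed

lemma ge_nk: "k < length b \<Longrightarrow> length b - k \<le> b!k"
proof -
  assume k: "k < length b"
  have "b!(length b - 1) + (length b - 1 - k) \<le> b!k" using gap[of k "length b - 1"] k by simp
  moreover have "0 < b!(length b - 1)" using pos k by simp
  ultimately show ?thesis by arith
qed

lemma vmono: "k \<le> j \<Longrightarrow> j < length b \<Longrightarrow> b!j + j \<le> b!k + k"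
  using gap by fastforce

lemma v_ge: "k < length b \<Longrightarrow> length b \<le> b!k + k"
  using ge_nk by fastforce

lemma cc_set: "{k. k < length b \<and> t \<le> b!k + k} = {..<cc b t}"
  unfolding cc_def
proof (rule down_closed_eq)
  show "finite {k. k < length b \<and> t \<le> b!k + k}" by simp
  show "\<forall>k\<in>{k. k < length b \<and> t \<le> b!k + k}. \<forall>j\<le>k. j \<in> {k. k < length b \<and> t \<le> b!k + k}"
  proof (intro ballI allI impI)
    fix k j assume k: "k \<in> {k. k < length b \<and> t \<le> b!k + k}" and jk: "j \<le> k"
    then have "b!k + k \<le> b!j + j" using vmono[of j k] by simp
    with k jk show "j \<in> {k. k < length b \<and> t \<le> b!k + k}" by simp
  qed
qed

lemma cc_mem: "k < cc b t \<longleftrightarrow> k < length b \<and> t \<le> b!k + k"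
proof -
  have "k \<in> {..<cc b t} \<longleftrightarrow> k \<in> {k. k < length b \<and> t \<le> b!k + k}" using cc_set by simp
  then show ?thesis by simp
qed

lemma cc_le: "cc b t \<le> length b"
proof (rule ccontr)
  assume "\<not> cc b t \<le> length b"
  then have "length b < cc b t" by simp
  then show False using cc_mem[of "length b" t] by simp
qed

lemma cc_mono: "t \<le> t' \<Longrightarrow> cc b t' \<le> cc b t"
proof (rule ccontr)
  assume a: "t \<le> t'" "\<not> cc b t' \<le> cc b t"
  then have "cc b t < cc b t'" by simp
  then have "cc b t < length b \<and> t' \<le> b!(cc b t) + cc b t" using cc_mem by blast
  then have "cc b t < cc b t" using cc_mem a(1) by (meson le_trans)
  then show False by simp
qed

lemma cc_n: "t \<le> length b \<Longrightarrow> cc b t = length b"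
proof -
  assume t: "t \<le> length b"
  have "{k. k < length b \<and> t \<le> b!k + k} = {..<length b}" using v_ge t by force
  then show ?thesis by (simp add: cc_def)
qed

lemma cc_big: "b \<noteq> [] \<Longrightarrow> b!0 < t \<Longrightarrow> cc b t = 0"
proof -
  assume ne: "b \<noteq> []" and t: "b!0 < t"
  have "{k. k < length b \<and> t \<le> b!k + k} = {}" using vmono[of 0] t by force
  then show ?thesis by (simp add: cc_def)
qed

lemma cc_pos: "b \<noteq> [] \<Longrightarrow> t \<le> b!0 \<Longrightarrow> 0 < cc b t"
  using cc_mem[of 0 t] by simp

lemma n_le_m: "b \<noteq> [] \<Longrightarrow> length b \<le> b!0"
  using v_ge[of 0] by simp

lemma GG_rec: "GG b t = GG b (Suc t) + (-1)^t * int (cc b t - cc b (Suc t))"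
proof -
  have le: "cc b (Suc t) \<le> cc b t" by (rule cc_mono) simp
  have sp: "GG b t = (\<Sum>k<cc b (Suc t). (-1::int)^(b!k+k)) + (\<Sum>k\<in>{cc b (Suc t)..<cc b t}. (-1)^(b!k+k))"
    unfolding GG_def using sum.atLeastLessThan_concat[of 0 "cc b (Suc t)" "cc b t" "\<lambda>k. (-1::int)^(b!k+k)"] le
    by (simp add: atLeast0LessThan)
  have "\<And>k. k \<in> {cc b (Suc t)..<cc b t} \<Longrightarrow> b!k + k = t"
  proof -
    fix k assume "k \<in> {cc b (Suc t)..<cc b t}"
    then have "k < cc b t" "\<not> k < cc b (Suc t)" by auto
    then show "b!k + k = t" using cc_mem[of k t] cc_mem[of k "Suc t"] by simp
  qed
  then have "(\<Sum>k\<in>{cc b (Suc t)..<cc b t}. (-1::int)^(b!k+k)) = (\<Sum>k\<in>{cc b (Suc t)..<cc b t}. (-1)^t)"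
    by (intro sum.cong refl) simp
  also have "\<dots> = int (cc b t - cc b (Suc t)) * (-1)^t" by simp
  finally show ?thesis using sp by (simp add: GG_def)
qed

end

context
  fixes b :: "nat list"
  assumes sd: "sorted_wrt (>) b" and pos: "\<forall>x\<in>set b. 0 < x"
begin

lemma ic_eq: "length b \<le> t \<Longrightarrow> card {k. k < length b \<and> t - length b \<le> b!k - (length b - k)} = cc b t"
proof -
  assume nt: "length b \<le> t"
  have "{k. k < length b \<and> t - length b \<le> b!k - (length b - k)} = {k. k < length b \<and> t \<le> b!k + k}"
  proof (rule Collect_cong)
    fix k
    show "(k < length b \<and> t - length b \<le> b!k - (length b - k)) = (k < length b \<and> t \<le> b!k + k)"
    proof (cases "k < length b")
      case True
      then have "length b - k \<le> b!k" by (rule ge_nk[OF sd pos])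
      with True nt show ?thesis by auto
    qed simp
  qed
  then show ?thesis by (simp add: cc_def)
qed

lemma Psi_eq:
  assumes ne: "b \<noteq> []"
  shows "Psi b = (map (\<lambda>p. b!0 - p) [0..<Suc (b!0 - length b)],
                  map (\<lambda>p. aa b (b!0 - p)) [0..<Suc (b!0 - length b)])"
proof -
  define n where "n = length b"
  define m where "m = b!0"
  have nm: "n \<le> m" unfolding n_def m_def using n_le_m[OF sd pos] ne by simp
  have n1: "1 \<le> n" using ne unfolding n_def by (cases b) auto
  have P: "Psi b = (rev [n..<Suc m],
      map (\<lambda>t. of_nat (card {k. k < n \<and> t - n \<le> b!k - (n - k)}) / of_nat t) (rev [Suc n..<Suc m]) @ [1])"
    unfolding Psi_def Let_def n_def m_def using ne by (simp add: hd_conv_nth)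
  have f: "rev [n..<Suc m] = map (\<lambda>p. m - p) [0..<Suc (m - n)]"
  proof (rule nth_equalityI)
    show "length (rev [n..<Suc m]) = length (map (\<lambda>p. m - p) [0..<Suc (m - n)])" using nm by simp
    fix i assume "i < length (rev [n..<Suc m])"
    then show "rev [n..<Suc m] ! i = map (\<lambda>p. m - p) [0..<Suc (m - n)] ! i"
      using nm by (simp add: rev_nth nth_upt del: upt_Suc)
  qed
  have an: "aa b n = 1" using n1 cc_n[OF sd pos, of n] ne unfolding aa_def n_def by simp
  have g: "map (\<lambda>t. of_nat (card {k. k < n \<and> t - n \<le> b!k - (n - k)}) / of_nat t) (rev [Suc n..<Suc m])
         = map (\<lambda>p. aa b (m - p)) [0..<m - n]"
  proof (rule nth_equalityI)
    show "length (map (\<lambda>t. of_nat (card {k. k < n \<and> t - n \<le> b!k - (n - k)}) / of_nat t) (rev [Suc n..<Suc m]))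
        = length (map (\<lambda>p. aa b (m - p)) [0..<m - n])" by auto
    fix p assume "p < length (map (\<lambda>t. of_nat (card {k. k < n \<and> t - n \<le> b!k - (n - k)}) / of_nat t) (rev [Suc n..<Suc m]))"
    then have p: "p < m - n" by (simp del: upt_Suc)
    have r: "rev [Suc n..<Suc m] ! p = m - p" using p by (simp add: rev_nth nth_upt del: upt_Suc)
    have "card {k. k < n \<and> (m - p) - n \<le> b!k - (n - k)} = cc b (m - p)"
      using ic_eq[of "m - p"] p unfolding n_def by simp
    then show "map (\<lambda>t. of_nat (card {k. k < n \<and> t - n \<le> b!k - (n - k)}) / of_nat t) (rev [Suc n..<Suc m]) ! p
        = map (\<lambda>p. aa b (m - p)) [0..<m - n] ! p" using p r by (simp add: aa_def del: upt_Suc)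
  qed
  have g2: "map (\<lambda>p. aa b (m - p)) [0..<Suc (m - n)] = map (\<lambda>p. aa b (m - p)) [0..<m - n] @ [1]"
    using an nm by simp
  show ?thesis using P f g g2 unfolding n_def m_def by simp
qed

end

context
  fixes b :: "nat list"
  assumes sd: "sorted_wrt (>) b" and pos: "\<forall>x\<in>set b. 0 < x"
begin

lemma turning_Psi:
  assumes ne: "b \<noteq> []"
  shows "j \<le> Suc (b!0 - length b) \<Longrightarrow>
       fst (turning (Psi b) j) = of_int (GG b (Suc (b!0) - j)) + (if even (Suc (b!0) - j) then aa b (Suc (b!0) - j) else 0)
     \<and> fst (snd (turning (Psi b) j)) = (if odd (Suc (b!0) - j) then aa b (Suc (b!0) - j) else 0) - of_int (GG b (Suc (b!0) - j))"
proof (induction j)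
  case 0
  have "cc b (Suc (b!0)) = 0" using cc_big[OF sd pos] ne by simp
  then show ?case by (simp add: turning_def GG_def aa_def)
next
  case (Suc j)
  define m where "m = b!0"
  define n where "n = length b"
  have nm: "n \<le> m" unfolding n_def m_def using n_le_m[OF sd pos] ne by simp
  have n1: "1 \<le> n" using ne unfolding n_def by (cases b) auto
  have jm: "j \<le> m - n" using Suc.prems unfolding m_def n_def by simp
  define s where "s = m - j"
  have s1: "1 \<le> s" "n \<le> s" using jm nm n1 unfolding s_def by auto
  have e1: "Suc m - j = Suc s" "Suc m - Suc j = s" using jm nm unfolding s_def by auto
  have IH: "fst (turning (Psi b) j) = of_int (GG b (Suc s)) + (if even (Suc s) then aa b (Suc s) else 0)
     \<and> fst (snd (turning (Psi b) j)) = (if odd (Suc s) then aa b (Suc s) else 0) - of_int (GG b (Suc s))"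
    using Suc.IH Suc.prems e1 unfolding m_def by simp
  have ps: "Psi b = (map (\<lambda>p. m - p) [0..<Suc (m - n)], map (\<lambda>p. aa b (m - p)) [0..<Suc (m - n)])"
    using Psi_eq[OF sd pos ne] unfolding m_def n_def by simp
  have ks: "fst (Psi b) ! j = s" using ps jm unfolding s_def by (simp del: upt_Suc)
  have asj: "snd (Psi b) ! j = aa b s" using ps jm unfolding s_def by (simp del: upt_Suc)
  have coef: "snd (Psi b) ! j - (if j = 0 then 0 else snd (Psi b) ! (j - 1)) = aa b s - aa b (Suc s)"
  proof (cases "j = 0")
    case True
    have "cc b (Suc m) = 0" using cc_big[OF sd pos] ne unfolding m_def by simp
    then have "aa b (Suc s) = 0" using True unfolding s_def aa_def by simp
    then show ?thesis using True asj by simp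
  next
    case False
    have "[0..<Suc (m - n)] ! (j - 1) = j - 1" using jm by (simp del: upt_Suc)
    then have "snd (Psi b) ! (j - 1) = aa b (m - (j - 1))" using ps jm by (simp del: upt_Suc)
    moreover have "m - (j - 1) = Suc s" using False jm nm unfolding s_def by auto
    ultimately show ?thesis using False asj by simp
  qed
  have tS: "turning (Psi b) (Suc j) = turning (Psi b) j + smultw (aa b s - aa b (Suc s)) (wact s (Lam 0))"
    using coef ks by (simp add: turning_def)
  have ha: "aa b s * of_nat s = of_nat (cc b s)" using s1 by (simp add: aa_def)
  have hb: "aa b (Suc s) * (of_nat s + 1) = of_nat (cc b (Suc s))"
  proof -
    have "(of_nat s + 1::rat) \<noteq> 0" by (metis of_nat_Suc of_nat_eq_0_iff add.commute nat.distinct(1))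
    then show ?thesis by (simp add: aa_def add.commute)
  qed
  have le: "cc b (Suc s) \<le> cc b s" by (rule cc_mono[OF sd pos]) simp
  have hG: "(of_int (GG b s)::rat) = of_int (GG b (Suc s)) + (-1)^s * (of_nat (cc b s) - of_nat (cc b (Suc s)))"
    using GG_rec[OF sd pos, of s] le by (simp add: of_nat_diff)
  show ?case
  proof (cases "even s")
    case True
    have w: "fst (wact s (Lam 0)) = of_nat s + 1" "fst (snd (wact s (Lam 0))) = - of_nat s"
      using wact_L0[of s] True by auto
    have hG': "(of_int (GG b s)::rat) = of_int (GG b (Suc s)) + of_nat (cc b s) - of_nat (cc b (Suc s))"
      using hG True by simp
    have x: "fst (turning (Psi b) (Suc j)) = of_int (GG b s) + aa b s"
      using IH True tS w ha hb hG' by (simp add: fst_smultw algebra_simps)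
    have y: "fst (snd (turning (Psi b) (Suc j))) = - of_int (GG b s)"
      using IH True tS w ha hb hG' by (simp add: snd_smultw algebra_simps)
    show ?thesis unfolding m_def[symmetric] using x y e1 True by simp
  next
    case False
    have w: "fst (wact s (Lam 0)) = - of_nat s" "fst (snd (wact s (Lam 0))) = of_nat s + 1"
      using wact_L0[of s] False by auto
    have hG': "(of_int (GG b s)::rat) = of_int (GG b (Suc s)) - of_nat (cc b s) + of_nat (cc b (Suc s))"
      using hG False by simp
    have x: "fst (turning (Psi b) (Suc j)) = of_int (GG b s)"
      using IH False tS w ha hb hG' by (simp add: fst_smultw algebra_simps)
    have y: "fst (snd (turning (Psi b) (Suc j))) = aa b s - of_int (GG b s)"
      using IH False tS w ha hb hG' by (simp add: snd_smultw algebra_simps)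
    show ?thesis unfolding m_def[symmetric] using x y e1 False by simp
  qed
qed

end

lemma alt_odd: "(\<forall>k<c. odd (f k)) \<Longrightarrow> (\<Sum>k<c. (-1::int)^(f k + k)) = (if even c then 0 else -1)"
proof (induction c)
  case 0 then show ?case by simp
next
  case (Suc c)
  then have "odd (f c)" by simp
  then have "(-1::int)^(f c + c) = (if even c then -1 else 1)" by (simp add: power_add)
  with Suc show ?case by simp
qed

lemma alt_even: "(\<forall>k<c. even (f k)) \<Longrightarrow> (\<Sum>k<c. (-1::int)^(f k + k)) = (if even c then 0 else 1)"
proof (induction c)
  case 0 then show ?case by simp
next
  case (Suc c)
  then have "even (f c)" by simp
  then have "(-1::int)^(f c + c) = (if even c then 1 else -1)" by (simp add: power_add)
  with Suc show ?case by simp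
qed

lemma aa_nonneg: "0 \<le> aa b t" by (simp add: aa_def)

definition cond0 :: "nat list \<Rightarrow> nat \<Rightarrow> bool" where
  "cond0 b t \<longleftrightarrow> 0 \<le> 1 + (of_int (GG b t) + (if even t then aa b t else 0)) \<and>
                 0 \<le> (if odd t then aa b t else 0) - of_int (GG b t)"
definition cond1 :: "nat list \<Rightarrow> nat \<Rightarrow> bool" where
  "cond1 b t \<longleftrightarrow> 0 \<le> of_int (GG b t) + (if even t then aa b t else 0) \<and>
                 0 \<le> 1 + ((if odd t then aa b t else 0) - of_int (GG b t))"

lemma dominant_plus: "dominant (v + w) \<longleftrightarrow> 0 \<le> fst v + fst w \<and> 0 \<le> fst (snd v) + fst (snd w)"
  by (simp add: dominant_def copair_eq)

context
  fixes b :: "nat list"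
  assumes sd: "sorted_wrt (>) b" and pos: "\<forall>x\<in>set b. 0 < x" and ne: "b \<noteq> []"
begin

lemma len_Psi: "length (fst (Psi b)) = Suc (b!0 - length b)"
  using Psi_eq[OF sd pos ne] by (simp del: upt_Suc)

lemma dom_iff0: "lam_dominant (Lam 0) (Psi b) \<longleftrightarrow> (\<forall>j \<le> Suc (b!0 - length b). cond0 b (Suc (b!0) - j))"
  unfolding lam_dominant_def len_Psi
  using turning_Psi[OF sd pos ne] by (simp add: dominant_plus Lam_def cond0_def)

lemma dom_iff1: "lam_dominant (Lam 1) (Psi b) \<longleftrightarrow> (\<forall>j \<le> Suc (b!0 - length b). cond1 b (Suc (b!0) - j))"
  unfolding lam_dominant_def len_Psi
  using turning_Psi[OF sd pos ne] by (simp add: dominant_plus Lam_def cond1_def)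

lemma par_cond0: "\<forall>x\<in>set b. odd x \<Longrightarrow> cond0 b t"
proof -
  assume o: "\<forall>x\<in>set b. odd x"
  have "\<forall>k<cc b t. odd (b!k)" using o cc_le[OF sd pos, of t] by auto
  then have "GG b t = (if even (cc b t) then 0 else -1)" unfolding GG_def using alt_odd[of "cc b t" "\<lambda>k. b!k"] by simp
  then show ?thesis using aa_nonneg[of b t] by (auto simp: cond0_def)
qed

lemma par_cond1: "\<forall>x\<in>set b. even x \<Longrightarrow> cond1 b t"
proof -
  assume o: "\<forall>x\<in>set b. even x"
  have "\<forall>k<cc b t. even (b!k)" using o cc_le[OF sd pos, of t] by auto
  then have "GG b t = (if even (cc b t) then 0 else 1)" unfolding GG_def using alt_even[of "cc b t" "\<lambda>k. b!k"] by simp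
  then show ?thesis using aa_nonneg[of b t] by (auto simp: cond1_def)
qed

lemma cond0_par:
  assumes cnd: "\<forall>j \<le> Suc (b!0 - length b). cond0 b (Suc (b!0) - j)"
  shows "\<forall>x\<in>set b. odd x"
proof -
  define m where "m = b!0"
  define n where "n = length b"
  have nm: "n \<le> m" unfolding n_def m_def using n_le_m[OF sd pos] ne by simp
  have main: "j \<le> Suc (m - n) \<Longrightarrow> (\<forall>k < cc b (Suc m - j). odd (b!k))" for j
  proof (induction j)
    case 0
    show ?case using cc_big[OF sd pos ne, of "Suc m"] unfolding m_def by simp
  next
    case (Suc j)
    have jm: "j \<le> m - n" using Suc.prems by simp
    define s where "s = m - j"
    have e1: "Suc m - j = Suc s" "Suc m - Suc j = s" using jm nm unfolding s_def by auto
    have ns: "n \<le> s" using jm nm unfolding s_def by auto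
    have IH: "\<forall>k < cc b (Suc s). odd (b!k)" using Suc.IH Suc.prems e1 by simp
    have c: "cond0 b s" using cnd[rule_format, of "Suc j"] Suc.prems e1 unfolding m_def n_def by simp
    have GS: "GG b (Suc s) = (if even (cc b (Suc s)) then 0 else -1)"
      unfolding GG_def using alt_odd[of "cc b (Suc s)" "\<lambda>k. b!k"] IH by simp
    have le: "cc b (Suc s) \<le> cc b s" by (rule cc_mono[OF sd pos]) simp
    have cs: "cc b (Suc s) \<le> s" using cc_le[OF sd pos, of "Suc s"] ns unfolding n_def by simp
    define d where "d = cc b s - cc b (Suc s)"
    have Gs: "GG b s = GG b (Suc s) + (-1)^s * int d" using GG_rec[OF sd pos, of s] unfolding d_def by simp
    have key: "d \<le> 1 \<and> (d = 1 \<longrightarrow> odd (s - cc b (Suc s)))"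
    proof (cases "even s")
      case True
      then have "GG b s \<le> 0" using c by (simp add: cond0_def)
      then show ?thesis using Gs GS True cs by (auto split: if_splits)
    next
      case False
      then have "-1 \<le> GG b s" using c by (simp add: cond0_def)
      then show ?thesis using Gs GS False cs by (auto split: if_splits)
    qed
    show ?case
    proof (intro allI impI)
      fix k assume k: "k < cc b (Suc m - Suc j)"
      then have k': "k < cc b s" using e1 by simp
      show "odd (b!k)"
      proof (cases "k < cc b (Suc s)")
        case True with IH show ?thesis by simp
      next
        case False
        then have kk: "k = cc b (Suc s)" "d = 1" using k' key le unfolding d_def by auto
        have "b!k + k = s" using cc_mem[OF sd pos, of k s] cc_mem[OF sd pos, of k "Suc s"] k' False by simp
        then have "b!k = s - cc b (Suc s)" using kk by simp
        then show ?thesis using key kk by simp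
      qed
    qed
  qed
  have "\<forall>k < cc b n. odd (b!k)" using main[of "Suc (m - n)"] nm by simp
  then have "\<forall>k < n. odd (b!k)" using cc_n[OF sd pos, of n] unfolding n_def by simp
  then show ?thesis unfolding n_def by (metis in_set_conv_nth)
qed

lemma cond1_par:
  assumes cnd: "\<forall>j \<le> Suc (b!0 - length b). cond1 b (Suc (b!0) - j)"
  shows "\<forall>x\<in>set b. even x"
proof -
  define m where "m = b!0"
  define n where "n = length b"
  have nm: "n \<le> m" unfolding n_def m_def using n_le_m[OF sd pos] ne by simp
  have main: "j \<le> Suc (m - n) \<Longrightarrow> (\<forall>k < cc b (Suc m - j). even (b!k))" for j
  proof (induction j)
    case 0
    show ?case using cc_big[OF sd pos ne, of "Suc m"] unfolding m_def by simp
  next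
    case (Suc j)
    have jm: "j \<le> m - n" using Suc.prems by simp
    define s where "s = m - j"
    have e1: "Suc m - j = Suc s" "Suc m - Suc j = s" using jm nm unfolding s_def by auto
    have ns: "n \<le> s" using jm nm unfolding s_def by auto
    have IH: "\<forall>k < cc b (Suc s). even (b!k)" using Suc.IH Suc.prems e1 by simp
    have c: "cond1 b s" using cnd[rule_format, of "Suc j"] Suc.prems e1 unfolding m_def n_def by simp
    have GS: "GG b (Suc s) = (if even (cc b (Suc s)) then 0 else 1)"
      unfolding GG_def using alt_even[of "cc b (Suc s)" "\<lambda>k. b!k"] IH by simp
    have le: "cc b (Suc s) \<le> cc b s" by (rule cc_mono[OF sd pos]) simp
    have cs: "cc b (Suc s) \<le> s" using cc_le[OF sd pos, of "Suc s"] ns unfolding n_def by simp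
    define d where "d = cc b s - cc b (Suc s)"
    have Gs: "GG b s = GG b (Suc s) + (-1)^s * int d" using GG_rec[OF sd pos, of s] unfolding d_def by simp
    have key: "d \<le> 1 \<and> (d = 1 \<longrightarrow> even (s - cc b (Suc s)))"
    proof (cases "even s")
      case True
      then have "GG b s \<le> 1" using c by (simp add: cond1_def)
      then show ?thesis using Gs GS True cs by (auto split: if_splits)
    next
      case False
      then have "0 \<le> GG b s" using c by (simp add: cond1_def)
      then show ?thesis using Gs GS False cs by (auto split: if_splits)
    qed
    show ?case
    proof (intro allI impI)
      fix k assume k: "k < cc b (Suc m - Suc j)"
      then have k': "k < cc b s" using e1 by simp
      show "even (b!k)"
      proof (cases "k < cc b (Suc s)")
        case True with IH show ?thesis by simp
      next
        case False
        then have kk: "k = cc b (Suc s)" "d = 1" using k' key le unfolding d_def by auto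
        have "b!k + k = s" using cc_mem[OF sd pos, of k s] cc_mem[OF sd pos, of k "Suc s"] k' False by simp
        then have "b!k = s - cc b (Suc s)" using kk by simp
        then show ?thesis using key kk by simp
      qed
    qed
  qed
  have "\<forall>k < cc b n. even (b!k)" using main[of "Suc (m - n)"] nm by simp
  then have "\<forall>k < n. even (b!k)" using cc_n[OF sd pos, of n] unfolding n_def by simp
  then show ?thesis unfolding n_def by (metis in_set_conv_nth)
qed

end

context
  fixes b :: "nat list"
  assumes sd: "sorted_wrt (>) b" and pos: "\<forall>x\<in>set b. 0 < x" and ne: "b \<noteq> []"
begin

lemma aa_strict:
  assumes "length b \<le> s" "s < s'" "s' \<le> b!0"
  shows "aa b s' < aa b s"
proof -
  have n1: "1 \<le> length b" using ne by (cases b) auto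
  have c1: "0 < cc b s'" using cc_pos[OF sd pos ne] assms by simp
  have le: "cc b s' \<le> cc b s" using cc_mono[OF sd pos] assms by simp
  have "cc b s' * s \<le> cc b s * s" using le by simp
  also have "\<dots> < cc b s * s'" using assms c1 le by simp
  finally have nat: "cc b s' * s < cc b s * s'" .
  then have "(of_nat (cc b s') * of_nat s :: rat) < of_nat (cc b s) * of_nat s'"
    by (metis of_nat_less_iff of_nat_mult)
  moreover have "(0::rat) < of_nat s" "(0::rat) < of_nat s'" using assms n1 by auto
  ultimately show ?thesis by (simp add: aa_def divide_less_eq field_simps)
qed

lemma is_LS_Psi: "is_LS (Psi b)"
proof -
  define m where "m = b!0"
  define n where "n = length b"
  have nm: "n \<le> m" unfolding n_def m_def using n_le_m[OF sd pos] ne by simp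
  have n1: "1 \<le> n" using ne unfolding n_def by (cases b) auto
  have ps: "Psi b = (map (\<lambda>p. m - p) [0..<Suc (m - n)], map (\<lambda>p. aa b (m - p)) [0..<Suc (m - n)])"
    using Psi_eq[OF sd pos ne] unfolding m_def n_def by simp
  have s1: "sorted_wrt (>) (map (\<lambda>p. m - p) [0..<Suc (m - n)])"
    unfolding sorted_wrt_iff_nth_less using nm by (auto simp del: upt_Suc)
  have posa: "\<forall>x\<in>set (map (\<lambda>p. aa b (m - p)) [0..<Suc (m - n)]). 0 < x"
  proof
    fix x assume "x \<in> set (map (\<lambda>p. aa b (m - p)) [0..<Suc (m - n)])"
    then obtain p where p: "p < Suc (m - n)" "x = aa b (m - p)" by (auto simp del: upt_Suc)
    have "0 < cc b (m - p)" using cc_pos[OF sd pos ne] unfolding m_def by simp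
    moreover have "0 < m - p" using p nm n1 by simp
    ultimately show "0 < x" using p by (simp add: aa_def)
  qed
  have s2: "sorted_wrt (<) (map (\<lambda>p. aa b (m - p)) [0..<Suc (m - n)])"
    unfolding sorted_wrt_iff_nth_less
  proof (intro allI impI)
    fix i j assume ij: "i < j" "j < length (map (\<lambda>p. aa b (m - p)) [0..<Suc (m - n)])"
    then have j: "j \<le> m - n" by (simp del: upt_Suc)
    have "aa b (m - i) < aa b (m - j)" using aa_strict[of "m - j" "m - i"] ij j nm unfolding m_def n_def by simp
    then show "map (\<lambda>p. aa b (m - p)) [0..<Suc (m - n)] ! i < map (\<lambda>p. aa b (m - p)) [0..<Suc (m - n)] ! j"
      using ij j by (simp del: upt_Suc)
  qed
  have an: "aa b n = 1" using n1 cc_n[OF sd pos, of n] ne unfolding aa_def n_def by simp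
  have la: "last (map (\<lambda>p. aa b (m - p)) [0..<Suc (m - n)]) = 1"
    using an nm by (simp add: last_map del: upt_Suc)
  have ch: "a_chain (map (\<lambda>p. aa b (m - p)) [0..<Suc (m - n)] ! (j - 1))
                    (map (\<lambda>p. m - p) [0..<Suc (m - n)] ! (j - 1)) (map (\<lambda>p. m - p) [0..<Suc (m - n)] ! j)"
    if j: "0 < j" "j < Suc (m - n)" for j
  proof -
    define s where "s = m - j"
    have e: "m - (j - 1) = Suc s" using j nm unfolding s_def by auto
    have u: "[0..<Suc (m - n)] ! (j - 1) = j - 1" using j by (simp del: upt_Suc)
    have a1: "map (\<lambda>p. aa b (m - p)) [0..<Suc (m - n)] ! (j - 1) = aa b (Suc s)" using j e u by (simp del: upt_Suc)
    have a2: "map (\<lambda>p. m - p) [0..<Suc (m - n)] ! (j - 1) = Suc s" using j e u by (simp del: upt_Suc)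
    have a3: "map (\<lambda>p. m - p) [0..<Suc (m - n)] ! j = s" using j unfolding s_def by (simp del: upt_Suc)
    have hb: "aa b (Suc s) * (of_nat s + 1) = of_nat (cc b (Suc s))"
    proof -
      have "(of_nat s + 1::rat) \<noteq> 0" by (metis of_nat_Suc of_nat_eq_0_iff add.commute nat.distinct(1))
      then show ?thesis by (simp add: aa_def add.commute)
    qed
    have "\<forall>k. s \<le> k \<and> k < Suc s \<longrightarrow> aa b (Suc s) * copair k (wact k (Lam 0)) \<in> \<int>"
    proof (intro allI impI)
      fix k assume "s \<le> k \<and> k < Suc s"
      then have "k = s" by simp
      then show "aa b (Suc s) * copair k (wact k (Lam 0)) \<in> \<int>" using hb by (simp add: copair_wact)
    qed
    then show ?thesis unfolding a1 a2 a3 a_chain_def by simp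
  qed
  let ?ks = "map (\<lambda>p. m - p) [0..<Suc (m - n)]"
  let ?as = "map (\<lambda>p. aa b (m - p)) [0..<Suc (m - n)]"
  have s2': "sorted_wrt (<) (0 # ?as)" using s2 posa by simp
  have ch': "\<forall>j. 0 < j \<and> j < length ?ks \<longrightarrow> a_chain (?as ! (j - 1)) (?ks ! (j - 1)) (?ks ! j)"
  proof (intro allI impI)
    fix j assume "0 < j \<and> j < length ?ks"
    then have "0 < j" "j < Suc (m - n)" by (simp_all del: upt_Suc)
    then show "a_chain (?as ! (j - 1)) (?ks ! (j - 1)) (?ks ! j)" by (rule ch)
  qed
  have "?ks \<noteq> [] \<and> length ?as = length ?ks" by (simp del: upt_Suc)
  then show ?thesis unfolding is_LS_def ps prod.case using s1 s2' la ch' by blast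
qed

lemma hd_Psi: "hd (fst (Psi b)) = hd b"
  using Psi_eq[OF sd pos ne] ne by (simp add: hd_conv_nth del: upt_Suc)

end

lemma Psi_Nil: "Psi [] = ([0], [1])" by (simp add: Psi_def)

lemma dom_Nil: "lam_dominant (Lam i) ([0], [1])"
proof -
  have "turning ([0], [1]) 0 = 0" by (simp add: turning_def)
  moreover have "turning ([0], [1]) 1 = Lam 0" by (simp add: turning_def smultw_def Lam_def)
  ultimately have "\<And>j. j \<le> 1 \<Longrightarrow> dominant (Lam i + turning ([0], [1]) j)"
    by (auto simp: le_Suc_eq dominant_plus Lam_def)
  then show ?thesis unfolding lam_dominant_def by simp
qed

theorem mainTheorem4:
  fixes i m :: nat
  assumes "i \<in> {0, 1}"
  shows "{b \<in> Y0. Psi b \<in> Pdom i m} =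
         {b \<in> Y0. (\<forall>x \<in> set b. if i = 0 then odd x else even x) \<and> (b \<noteq> [] \<longrightarrow> hd b \<le> m)}"
proof -
  have "Psi b \<in> Pdom i m \<longleftrightarrow> (\<forall>x \<in> set b. if i = 0 then odd x else even x) \<and> (b \<noteq> [] \<longrightarrow> hd b \<le> m)"
    if b: "b \<in> Y0" for b
  proof (cases "b = []")
    case True
    then show ?thesis using dom_Nil[of i] by (simp add: Psi_Nil Pdom_def is_LS_def)
  next
    case False
    have sd: "sorted_wrt (>) b" and pos: "\<forall>x\<in>set b. 0 < x" using b by (auto simp: Y0_def)
    have dom: "lam_dominant (Lam i) (Psi b) \<longleftrightarrow> (\<forall>x \<in> set b. if i = 0 then odd x else even x)"
    proof (cases "i = 0")
      case True
      then show ?thesis using dom_iff0[OF sd pos False] par_cond0[OF sd pos False] cond0_par[OF sd pos False] by auto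
    next
      case False': False
      then have "i = 1" using assms by simp
      then show ?thesis using dom_iff1[OF sd pos False] par_cond1[OF sd pos False] cond1_par[OF sd pos False] by auto
    qed
    show ?thesis unfolding Pdom_def using is_LS_Psi[OF sd pos False] hd_Psi[OF sd pos False] dom False by simp
  qed
  then show ?thesis by auto
qed

end
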